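(* Let $\tau$ be a permutation. Let $M_{\tau,top}$ (resp. $M_{\tau,bottom}$) be the quasi-permutation matrix obtained by adding a row of $0$ entries above (resp. below) the permutation matrix of $\tau$, and let $M_{\tau,right}$ (resp. $M_{\tau,left}$) be the matrix obtained by adding a column of $0$ entries to the right (resp. left) of the permutation matrix of $\tau$. Then the permutations of $Av_{\mathfrak{S}}(M_{\tau,top})$ (resp. $Av_{\mathfrak{S}}(M_{\tau,bottom})$, $Av_{\mathfrak{S}}(M_{\tau,right})$, $Av_{\mathfrak{S}}(M_{\tau,left})$) are exactly the permutations obtained from a permutation avoiding $\tau$ by adding a maximal (resp. minimal, resp. last, resp. first) element.
   Context: A permutation $\sigma$ of $\{1,\dots,n\}$ is identified with its permutation matrix $M_\sigma$, with $M_\sigma(i,j)=1$ iff $i=\sigma(j)$ and rows numbered from bottom to top (so "above" means larger values and "right" means larger positions). A matrix is a submatrix of another if obtained by deleting rows and/or columns. A permutation $\sigma$ contains $\pi$ as a pattern iff $M_\pi$ is a submatrix of $M_\sigma$; $\sigma$ avoids $\tau$ otherwise. $Av_{\mathfrak{S}}(M)$ is the set of permutations whose matrix has no submatrix equal to $M$. Adding a maximal element to a permutation $\sigma'$ of size $n$ means forming a permutation of size $n+1$ whose matrix is obtained from $M_{\sigma'}$ by inserting a new top row and a new column (anywhere) with a $1$ at their intersection; adding a minimal, last, or first element is defined analogously (new bottom row, new rightmost column, new leftmost column respectively). *)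

theory Defs
  imports "HOL-Combinatorics.Permutations"
begin

text \<open>0/1 matrices: (number of rows, number of columns, entries).
  Rows and columns are numbered from 1; row 1 is the bottom row, column 1 the leftmost.
  Entries outside the index range are irrelevant.\<close>
type_synonym bmat = "nat \<times> nat \<times> (nat \<Rightarrow> nat \<Rightarrow> bool)"

definition nrows :: "bmat \<Rightarrow> nat" where "nrows A = fst A"
definition ncols :: "bmat \<Rightarrow> nat" where "ncols A = fst (snd A)"
definition ent :: "bmat \<Rightarrow> nat \<Rightarrow> nat \<Rightarrow> bool" where "ent A = snd (snd A)"

definition mat_eq :: "bmat \<Rightarrow> bmat \<Rightarrow> bool" where
  "mat_eq A B \<longleftrightarrow> nrows A = nrows B \<and> ncols A = ncols B \<and>
     (\<forall>i\<in>{1..nrows A}. \<forall>j\<in>{1..ncols A}. ent A i j = ent B i j)"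

definition submatrix :: "bmat \<Rightarrow> bmat \<Rightarrow> bool" where
  "submatrix A B \<longleftrightarrow> (\<exists>r c.
     strict_mono_on {1..nrows A} r \<and> r ` {1..nrows A} \<subseteq> {1..nrows B} \<and>
     strict_mono_on {1..ncols A} c \<and> c ` {1..ncols A} \<subseteq> {1..ncols B} \<and>
     (\<forall>i\<in>{1..nrows A}. \<forall>j\<in>{1..ncols A}. ent A i j = ent B (r i) (c j)))"

definition pmat :: "nat \<Rightarrow> (nat \<Rightarrow> nat) \<Rightarrow> bmat" where
  "pmat n \<sigma> = (n, n, \<lambda>i j. i = \<sigma> j)"

definition contains :: "nat \<Rightarrow> (nat \<Rightarrow> nat) \<Rightarrow> nat \<Rightarrow> (nat \<Rightarrow> nat) \<Rightarrow> bool" where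
  "contains n \<sigma> m \<pi> \<longleftrightarrow> submatrix (pmat m \<pi>) (pmat n \<sigma>)"

definition avoids :: "nat \<Rightarrow> (nat \<Rightarrow> nat) \<Rightarrow> nat \<Rightarrow> (nat \<Rightarrow> nat) \<Rightarrow> bool" where
  "avoids n \<sigma> m \<pi> \<longleftrightarrow> \<not> contains n \<sigma> m \<pi>"

definition Av :: "bmat \<Rightarrow> (nat \<times> (nat \<Rightarrow> nat)) set" where
  "Av M = {(n, \<sigma>). n \<ge> 1 \<and> \<sigma> permutes {1..n} \<and> \<not> submatrix M (pmat n \<sigma>)}"

definition zero_row_top :: "bmat \<Rightarrow> bmat" where
  "zero_row_top A = (nrows A + 1, ncols A, \<lambda>i j. if i = nrows A + 1 then False else ent A i j)"
definition zero_row_bottom :: "bmat \<Rightarrow> bmat" where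
  "zero_row_bottom A = (nrows A + 1, ncols A, \<lambda>i j. if i = 1 then False else ent A (i - 1) j)"
definition zero_col_right :: "bmat \<Rightarrow> bmat" where
  "zero_col_right A = (nrows A, ncols A + 1, \<lambda>i j. if j = ncols A + 1 then False else ent A i j)"
definition zero_col_left :: "bmat \<Rightarrow> bmat" where
  "zero_col_left A = (nrows A, ncols A + 1, \<lambda>i j. if j = 1 then False else ent A i (j - 1))"

definition ins_rc :: "bmat \<Rightarrow> nat \<Rightarrow> nat \<Rightarrow> bmat" where
  "ins_rc A h k = (nrows A + 1, ncols A + 1, \<lambda>i j.
     if i = h \<and> j = k then True
     else if i = h \<or> j = k then False
     else ent A (if i < h then i else i - 1) (if j < k then j else j - 1))"

definition add_max_set :: "nat \<Rightarrow> (nat \<Rightarrow> nat) \<Rightarrow> (nat \<times> (nat \<Rightarrow> nat)) set" where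
  "add_max_set m \<tau> = {(n + 1, \<sigma>) | n \<sigma> \<sigma>' k. \<sigma> permutes {1..n+1} \<and> \<sigma>' permutes {1..n} \<and>
      avoids n \<sigma>' m \<tau> \<and> k \<in> {1..n+1} \<and> mat_eq (pmat (n+1) \<sigma>) (ins_rc (pmat n \<sigma>') (n+1) k)}"
definition add_min_set :: "nat \<Rightarrow> (nat \<Rightarrow> nat) \<Rightarrow> (nat \<times> (nat \<Rightarrow> nat)) set" where
  "add_min_set m \<tau> = {(n + 1, \<sigma>) | n \<sigma> \<sigma>' k. \<sigma> permutes {1..n+1} \<and> \<sigma>' permutes {1..n} \<and>
      avoids n \<sigma>' m \<tau> \<and> k \<in> {1..n+1} \<and> mat_eq (pmat (n+1) \<sigma>) (ins_rc (pmat n \<sigma>') 1 k)}"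
definition add_last_set :: "nat \<Rightarrow> (nat \<Rightarrow> nat) \<Rightarrow> (nat \<times> (nat \<Rightarrow> nat)) set" where
  "add_last_set m \<tau> = {(n + 1, \<sigma>) | n \<sigma> \<sigma>' h. \<sigma> permutes {1..n+1} \<and> \<sigma>' permutes {1..n} \<and>
      avoids n \<sigma>' m \<tau> \<and> h \<in> {1..n+1} \<and> mat_eq (pmat (n+1) \<sigma>) (ins_rc (pmat n \<sigma>') h (n+1))}"
definition add_first_set :: "nat \<Rightarrow> (nat \<Rightarrow> nat) \<Rightarrow> (nat \<times> (nat \<Rightarrow> nat)) set" where
  "add_first_set m \<tau> = {(n + 1, \<sigma>) | n \<sigma> \<sigma>' h. \<sigma> permutes {1..n+1} \<and> \<sigma>' permutes {1..n} \<and>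
      avoids n \<sigma>' m \<tau> \<and> h \<in> {1..n+1} \<and> mat_eq (pmat (n+1) \<sigma>) (ins_rc (pmat n \<sigma>') h 1)}"

end

theory Submission
  imports Defs
begin

lemma sel[simp]: "nrows (a,b,f) = a" "ncols (a,b,f) = b" "ent (a,b,f) = f"
  by (simp_all add: nrows_def ncols_def ent_def)

lemma sub_mat_eq:
  assumes "mat_eq B B'" "submatrix A B" shows "submatrix A B'"
proof -
  obtain r c where rc: "strict_mono_on {1..nrows A} r" "r ` {1..nrows A} \<subseteq> {1..nrows B}"
     "strict_mono_on {1..ncols A} c" "c ` {1..ncols A} \<subseteq> {1..ncols B}"
     "\<forall>i\<in>{1..nrows A}. \<forall>j\<in>{1..ncols A}. ent A i j = ent B (r i) (c j)"
    using assms(2) unfolding submatrix_def by (elim exE conjE) (rule that)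
  show ?thesis unfolding submatrix_def
  proof (intro exI conjI)
    have eq: "nrows B = nrows B'" "ncols B = ncols B'"
      and ee: "\<And>i j. i \<in> {1..nrows B} \<Longrightarrow> j \<in> {1..ncols B} \<Longrightarrow> ent B i j = ent B' i j"
      using assms(1) unfolding mat_eq_def by auto
    show "strict_mono_on {1..nrows A} r" "strict_mono_on {1..ncols A} c" using rc by auto
    show "r ` {1..nrows A} \<subseteq> {1..nrows B'}" "c ` {1..ncols A} \<subseteq> {1..ncols B'}"
      using rc(2,4) eq by auto
    show "\<forall>i\<in>{1..nrows A}. \<forall>j\<in>{1..ncols A}. ent A i j = ent B' (r i) (c j)"
    proof (intro ballI)
      fix i j assume i: "i \<in> {1..nrows A}" and j: "j \<in> {1..ncols A}"
      have "r i \<in> {1..nrows B}" "c j \<in> {1..ncols B}" using rc(2,4) i j by (auto simp: image_subset_iff)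
      thus "ent A i j = ent B' (r i) (c j)" using rc(5) i j ee by auto
    qed
  qed
qed

definition tr :: "bmat \<Rightarrow> bmat" where
  "tr A = (ncols A, nrows A, \<lambda>i j. ent A j i)"

lemma tr_sel[simp]: "nrows (tr A) = ncols A" "ncols (tr A) = nrows A"
  "ent (tr A) i j = ent A j i"
  by (simp_all add: tr_def)

lemma sub_tr: assumes "submatrix A B" shows "submatrix (tr A) (tr B)"
proof -
  obtain r c where rc: "strict_mono_on {1..nrows A} r" "r ` {1..nrows A} \<subseteq> {1..nrows B}"
     "strict_mono_on {1..ncols A} c" "c ` {1..ncols A} \<subseteq> {1..ncols B}"
     "\<forall>i\<in>{1..nrows A}. \<forall>j\<in>{1..ncols A}. ent A i j = ent B (r i) (c j)"
    using assms unfolding submatrix_def by (elim exE conjE) (rule that)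
  show ?thesis unfolding submatrix_def tr_sel
    by (rule exI[of _ c], rule exI[of _ r]) (use rc in simp)
qed

lemma tr_tr: "tr (tr A) = A"
  by (cases A) (simp add: tr_def nrows_def ncols_def ent_def)

lemma sub_tr_iff: "submatrix (tr A) (tr B) \<longleftrightarrow> submatrix A B"
  by (metis sub_tr tr_tr)

lemma tr_ins: "tr (ins_rc A h k) = ins_rc (tr A) k h"
  by (auto simp: tr_def ins_rc_def fun_eq_iff)

lemma tr_right: "tr (zero_col_right P) = zero_row_top (tr P)"
  by (auto simp: tr_def zero_col_right_def zero_row_top_def fun_eq_iff)

lemma tr_left: "tr (zero_col_left P) = zero_row_bottom (tr P)"
  by (auto simp: tr_def zero_col_left_def zero_row_bottom_def fun_eq_iff)

lemma dims[simp]: "nrows (zero_row_top P) = nrows P + 1" "ncols (zero_row_top P) = ncols P"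
  "nrows (zero_row_bottom P) = nrows P + 1" "ncols (zero_row_bottom P) = ncols P"
  "nrows (ins_rc A h k) = nrows A + 1" "ncols (ins_rc A h k) = ncols A + 1"
  by (simp_all add: zero_row_top_def zero_row_bottom_def ins_rc_def)

lemma top_lemma:
  assumes cols: "\<forall>j\<in>{1..ncols P}. \<exists>i\<in>{1..nrows P}. ent P i j"
    and k: "k \<in> {1..ncols A+1}"
  shows "submatrix (zero_row_top P) (ins_rc A (nrows A+1) k) \<longleftrightarrow> submatrix P A"
proof
  assume "submatrix (zero_row_top P) (ins_rc A (nrows A+1) k)"
  then obtain r c where r: "strict_mono_on {1..nrows P+1} r" "r ` {1..nrows P+1} \<subseteq> {1..nrows A+1}"
     and c: "strict_mono_on {1..ncols P} c" "c ` {1..ncols P} \<subseteq> {1..ncols A+1}"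
     and e: "\<forall>i\<in>{1..nrows P+1}. \<forall>j\<in>{1..ncols P}. ent (zero_row_top P) i j = ent (ins_rc A (nrows A+1) k) (r i) (c j)"
    unfolding submatrix_def dims by (elim exE conjE) (rule that)
  have rb: "r i \<le> nrows A" if "i \<in> {1..nrows P}" for i
  proof -
    have "r i < r (nrows P+1)" using r(1) that by (auto intro: strict_mono_onD)
    moreover have "r (nrows P+1) \<le> nrows A + 1" using r(2) that by (auto simp: image_subset_iff)
    ultimately show ?thesis by simp
  qed
  have ck: "c j \<noteq> k" if "j \<in> {1..ncols P}" for j
  proof
    assume ck: "c j = k"
    have "\<exists>i\<in>{1..nrows P}. ent P i j" using cols that by simp
    then obtain i where i: "i \<in> {1..nrows P}" "ent P i j" by (rule bexE)
    have "ent (zero_row_top P) i j" using i by (simp add: zero_row_top_def)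
    moreover have i2: "i \<in> {1..nrows P+1}" using i by auto
    ultimately have "ent (ins_rc A (nrows A+1) k) (r i) (c j)" using e[rule_format, OF i2 that] by simp
    thus False using rb[OF i(1)] ck by (simp add: ins_rc_def)
  qed
  define c' where "c' j = (if c j < k then c j else c j - 1)" for j
  show "submatrix P A" unfolding submatrix_def
  proof (intro exI conjI)
    show "strict_mono_on {1..nrows P} r" by (rule strict_mono_onI) (auto intro: strict_mono_onD[OF r(1)])
    show "r ` {1..nrows P} \<subseteq> {1..nrows A}"
    proof (rule image_subsetI)
      fix i assume i: "i \<in> {1..nrows P}"
      have "r i \<in> {1..nrows A+1}" using r(2) i by (auto simp: image_subset_iff)
      then show "r i \<in> {1..nrows A}" using rb[OF i] by auto
    qed
    show "strict_mono_on {1..ncols P} c'"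
    proof (rule strict_mono_onI)
      fix a b assume ab: "a \<in> {1..ncols P}" "b \<in> {1..ncols P}" "a < b"
      have "c a < c b" using strict_mono_onD[OF c(1) ab] .
      thus "c' a < c' b" using ck[OF ab(1)] ck[OF ab(2)] unfolding c'_def by auto
    qed
    show "c' ` {1..ncols P} \<subseteq> {1..ncols A}"
    proof
      fix y assume "y \<in> c' ` {1..ncols P}"
      then obtain j where j: "j \<in> {1..ncols P}" "y = c' j" by auto
      have "c j \<in> {1..ncols A+1}" using c(2) j(1) by (auto simp: image_subset_iff)
      thus "y \<in> {1..ncols A}" using ck[OF j(1)] k j unfolding c'_def by auto
    qed
    show "\<forall>i\<in>{1..nrows P}. \<forall>j\<in>{1..ncols P}. ent P i j = ent A (r i) (c' j)"
    proof (intro ballI)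
      fix i j assume i: "i \<in> {1..nrows P}" and j: "j \<in> {1..ncols P}"
      have "ent P i j = ent (zero_row_top P) i j" using i by (simp add: zero_row_top_def)
      also have "\<dots> = ent (ins_rc A (nrows A+1) k) (r i) (c j)" using e[rule_format, of i j] i j by simp
      also have "\<dots> = ent A (r i) (c' j)"
        using rb[OF i] ck[OF j] unfolding ins_rc_def c'_def by auto
      finally show "ent P i j = ent A (r i) (c' j)" .
    qed
  qed
next
  assume "submatrix P A"
  then obtain r c where r: "strict_mono_on {1..nrows P} r" "r ` {1..nrows P} \<subseteq> {1..nrows A}"
     and c: "strict_mono_on {1..ncols P} c" "c ` {1..ncols P} \<subseteq> {1..ncols A}"
     and e: "\<forall>i\<in>{1..nrows P}. \<forall>j\<in>{1..ncols P}. ent P i j = ent A (r i) (c j)"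
    unfolding submatrix_def by (elim exE conjE) (rule that)
  define r' where "r' i = (if i = nrows P + 1 then nrows A + 1 else r i)" for i
  define c' where "c' j = (if c j < k then c j else c j + 1)" for j
  show "submatrix (zero_row_top P) (ins_rc A (nrows A+1) k)" unfolding submatrix_def
  proof (intro exI conjI)
    show "strict_mono_on {1..nrows (zero_row_top P)} r'"
    proof (rule strict_mono_onI)
      fix a b assume ab: "a \<in> {1..nrows (zero_row_top P)}" "b \<in> {1..nrows (zero_row_top P)}" "a < b"
      show "r' a < r' b"
      proof (cases "b = nrows P + 1")
        case True
        then have "a \<in> {1..nrows P}" using ab by (auto simp: zero_row_top_def)
        then have "r a \<in> {1..nrows A}" using r(2) by (auto simp: image_subset_iff)
        then show ?thesis using True \<open>a < b\<close> unfolding r'_def by auto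
      next
        case False
        then have "a \<in> {1..nrows P}" "b \<in> {1..nrows P}" using ab by auto
        then show ?thesis using False ab(3) strict_mono_onD[OF r(1)] unfolding r'_def by auto
      qed
    qed
    show "r' ` {1..nrows (zero_row_top P)} \<subseteq> {1..nrows (ins_rc A (nrows A+1) k)}"
    proof (rule image_subsetI)
      fix i assume i: "i \<in> {1..nrows (zero_row_top P)}"
      show "r' i \<in> {1..nrows (ins_rc A (nrows A+1) k)}"
      proof (cases "i = nrows P + 1")
        case True thus ?thesis by (simp add: r'_def)
      next
        case False
        hence "i \<in> {1..nrows P}" using i by auto
        hence "r i \<in> {1..nrows A}" using r(2) by (auto simp: image_subset_iff)
        thus ?thesis using False by (simp add: r'_def)
      qed
    qed
    show "strict_mono_on {1..ncols (zero_row_top P)} c'"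
    proof (rule strict_mono_onI)
      fix a b assume ab: "a \<in> {1..ncols (zero_row_top P)}" "b \<in> {1..ncols (zero_row_top P)}" "a < b"
      have "c a < c b" using strict_mono_onD[OF c(1)] ab by simp
      thus "c' a < c' b" unfolding c'_def by auto
    qed
    show "c' ` {1..ncols (zero_row_top P)} \<subseteq> {1..ncols (ins_rc A (nrows A+1) k)}"
    proof (rule image_subsetI)
      fix j assume j: "j \<in> {1..ncols (zero_row_top P)}"
      hence "c j \<in> {1..ncols A}" using c(2) by (auto simp: image_subset_iff)
      thus "c' j \<in> {1..ncols (ins_rc A (nrows A+1) k)}" unfolding c'_def by auto
    qed
    show "\<forall>i\<in>{1..nrows (zero_row_top P)}. \<forall>j\<in>{1..ncols (zero_row_top P)}.
       ent (zero_row_top P) i j = ent (ins_rc A (nrows A+1) k) (r' i) (c' j)"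
    proof (intro ballI)
      fix i j assume i: "i \<in> {1..nrows (zero_row_top P)}" and j: "j \<in> {1..ncols (zero_row_top P)}"
      show "ent (zero_row_top P) i j = ent (ins_rc A (nrows A+1) k) (r' i) (c' j)"
      proof (cases "i = nrows P + 1")
        case True
        then show ?thesis unfolding r'_def c'_def by (auto simp: zero_row_top_def ins_rc_def)
      next
        case False
        then have i': "i \<in> {1..nrows P}" using i by (auto simp: zero_row_top_def)
        have j': "j \<in> {1..ncols P}" using j by (auto simp: zero_row_top_def)
        have "r i \<le> nrows A" using r(2) i' by (auto simp: image_subset_iff)
        then show ?thesis using False e i' j' unfolding r'_def c'_def
          by (auto simp: zero_row_top_def ins_rc_def)
      qed
    qed
  qed
qed

lemma bottom_lemma:
  assumes cols: "\<forall>j\<in>{1..ncols P}. \<exists>i\<in>{1..nrows P}. ent P i j"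
    and k: "k \<in> {1..ncols A+1}"
  shows "submatrix (zero_row_bottom P) (ins_rc A 1 k) \<longleftrightarrow> submatrix P A"
proof
  assume "submatrix (zero_row_bottom P) (ins_rc A 1 k)"
  then obtain r c where r: "strict_mono_on {1..nrows P+1} r" "r ` {1..nrows P+1} \<subseteq> {1..nrows A+1}"
     and c: "strict_mono_on {1..ncols P} c" "c ` {1..ncols P} \<subseteq> {1..ncols A+1}"
     and e: "\<forall>i\<in>{1..nrows P+1}. \<forall>j\<in>{1..ncols P}. ent (zero_row_bottom P) i j = ent (ins_rc A 1 k) (r i) (c j)"
    unfolding submatrix_def dims by (elim exE conjE) (rule that)
  have rb: "r (i+1) \<ge> 2 \<and> r (i+1) \<le> nrows A + 1" if "i \<in> {1..nrows P}" for i
  proof -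
    have "r 1 < r (i+1)" using strict_mono_onD[OF r(1)] that by simp
    moreover have "r 1 \<ge> 1" "r (i+1) \<le> nrows A + 1" using r(2) that by (auto simp: image_subset_iff)
    ultimately show ?thesis by simp
  qed
  have ck: "c j \<noteq> k" if "j \<in> {1..ncols P}" for j
  proof
    assume ck: "c j = k"
    have "\<exists>i\<in>{1..nrows P}. ent P i j" using cols that by simp
    then obtain i where i: "i \<in> {1..nrows P}" "ent P i j" by (rule bexE)
    have "ent (zero_row_bottom P) (i+1) j" using i by (simp add: zero_row_bottom_def)
    moreover have i2: "i+1 \<in> {1..nrows P+1}" using i by auto
    ultimately have "ent (ins_rc A 1 k) (r (i+1)) (c j)" using e[rule_format, OF i2 that] by simp
    thus False using rb[OF i(1)] ck by (simp add: ins_rc_def)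
  qed
  define r' where "r' i = r (i+1) - 1" for i
  define c' where "c' j = (if c j < k then c j else c j - 1)" for j
  show "submatrix P A" unfolding submatrix_def
  proof (intro exI conjI)
    show "strict_mono_on {1..nrows P} r'"
    proof (rule strict_mono_onI)
      fix a b assume ab: "a \<in> {1..nrows P}" "b \<in> {1..nrows P}" "a < b"
      have "r (a+1) < r (b+1)" using strict_mono_onD[OF r(1)] ab by simp
      thus "r' a < r' b" using rb[OF ab(1)] rb[OF ab(2)] unfolding r'_def by simp
    qed
    show "r' ` {1..nrows P} \<subseteq> {1..nrows A}"
    proof (rule image_subsetI)
      fix i assume i: "i \<in> {1..nrows P}"
      then show "r' i \<in> {1..nrows A}" using rb[OF i] unfolding r'_def by auto
    qed
    show "strict_mono_on {1..ncols P} c'"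
    proof (rule strict_mono_onI)
      fix a b assume ab: "a \<in> {1..ncols P}" "b \<in> {1..ncols P}" "a < b"
      have "c a < c b" using strict_mono_onD[OF c(1) ab] .
      thus "c' a < c' b" using ck[OF ab(1)] ck[OF ab(2)] unfolding c'_def by auto
    qed
    show "c' ` {1..ncols P} \<subseteq> {1..ncols A}"
    proof
      fix y assume "y \<in> c' ` {1..ncols P}"
      then obtain j where j: "j \<in> {1..ncols P}" "y = c' j" by auto
      have "c j \<in> {1..ncols A+1}" using c(2) j(1) by (auto simp: image_subset_iff)
      thus "y \<in> {1..ncols A}" using ck[OF j(1)] k j unfolding c'_def by auto
    qed
    show "\<forall>i\<in>{1..nrows P}. \<forall>j\<in>{1..ncols P}. ent P i j = ent A (r' i) (c' j)"
    proof (intro ballI)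
      fix i j assume i: "i \<in> {1..nrows P}" and j: "j \<in> {1..ncols P}"
      have i2: "i+1 \<in> {1..nrows P+1}" using i by auto
      have "ent P i j = ent (zero_row_bottom P) (i+1) j" using i by (simp add: zero_row_bottom_def)
      also have "\<dots> = ent (ins_rc A 1 k) (r (i+1)) (c j)" using e[rule_format, OF i2 j] by simp
      also have "\<dots> = ent A (r' i) (c' j)"
        using rb[OF i] ck[OF j] unfolding ins_rc_def c'_def r'_def by auto
      finally show "ent P i j = ent A (r' i) (c' j)" .
    qed
  qed
next
  assume "submatrix P A"
  then obtain r c where r: "strict_mono_on {1..nrows P} r" "r ` {1..nrows P} \<subseteq> {1..nrows A}"
     and c: "strict_mono_on {1..ncols P} c" "c ` {1..ncols P} \<subseteq> {1..ncols A}"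
     and e: "\<forall>i\<in>{1..nrows P}. \<forall>j\<in>{1..ncols P}. ent P i j = ent A (r i) (c j)"
    unfolding submatrix_def by (elim exE conjE) (rule that)
  define r' where "r' i = (if i = 1 then 1 else r (i - 1) + 1)" for i
  define c' where "c' j = (if c j < k then c j else c j + 1)" for j
  have rr: "r i \<in> {1..nrows A}" if "i \<in> {1..nrows P}" for i
    using r(2) that by (auto simp: image_subset_iff)
  show "submatrix (zero_row_bottom P) (ins_rc A 1 k)" unfolding submatrix_def dims
  proof (intro exI conjI)
    show "strict_mono_on {1..nrows P + 1} r'"
    proof (rule strict_mono_onI)
      fix a b assume ab: "a \<in> {1..nrows P + 1}" "b \<in> {1..nrows P + 1}" "a < b"
      show "r' a < r' b"
      proof (cases "a = 1")
        case True
        have "b - 1 \<in> {1..nrows P}" using ab True by auto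
        from rr[OF this] show ?thesis using True ab(3) unfolding r'_def by auto
      next
        case False
        then have "a - 1 \<in> {1..nrows P}" "b - 1 \<in> {1..nrows P}" "a - 1 < b - 1" using ab by auto
        then show ?thesis using False ab(3) strict_mono_onD[OF r(1)] unfolding r'_def by auto
      qed
    qed
    show "r' ` {1..nrows P + 1} \<subseteq> {1..nrows A + 1}"
    proof (rule image_subsetI)
      fix i assume i: "i \<in> {1..nrows P + 1}"
      show "r' i \<in> {1..nrows A + 1}"
      proof (cases "i = 1")
        case True thus ?thesis by (simp add: r'_def)
      next
        case False
        hence "i - 1 \<in> {1..nrows P}" using i by auto
        from rr[OF this] show ?thesis using False by (simp add: r'_def)
      qed
    qed
    show "strict_mono_on {1..ncols P} c'"
    proof (rule strict_mono_onI)
      fix a b assume ab: "a \<in> {1..ncols P}" "b \<in> {1..ncols P}" "a < b"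
      have "c a < c b" using strict_mono_onD[OF c(1)] ab by simp
      thus "c' a < c' b" unfolding c'_def by auto
    qed
    show "c' ` {1..ncols P} \<subseteq> {1..ncols A + 1}"
    proof (rule image_subsetI)
      fix j assume j: "j \<in> {1..ncols P}"
      hence "c j \<in> {1..ncols A}" using c(2) by (auto simp: image_subset_iff)
      thus "c' j \<in> {1..ncols A + 1}" unfolding c'_def by auto
    qed
    show "\<forall>i\<in>{1..nrows P + 1}. \<forall>j\<in>{1..ncols P}.
       ent (zero_row_bottom P) i j = ent (ins_rc A 1 k) (r' i) (c' j)"
    proof (intro ballI)
      fix i j assume i: "i \<in> {1..nrows P + 1}" and j: "j \<in> {1..ncols P}"
      show "ent (zero_row_bottom P) i j = ent (ins_rc A 1 k) (r' i) (c' j)"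
      proof (cases "i = 1")
        case True
        then show ?thesis unfolding r'_def c'_def by (auto simp: zero_row_bottom_def ins_rc_def)
      next
        case False
        then have i': "i - 1 \<in> {1..nrows P}" using i by auto
        have "ent P (i - 1) j = ent A (r (i - 1)) (c j)" using e i' j by simp
        then show ?thesis using False rr[OF i'] unfolding r'_def c'_def
          by (auto simp: zero_row_bottom_def ins_rc_def)
      qed
    qed
  qed
qed

lemma delete_lemma:
  assumes p: "\<sigma> permutes {1..n+1}" and k: "k \<in> {1..n+1}" and h: "\<sigma> k = h"
  shows "\<exists>\<sigma>'. \<sigma>' permutes {1..n} \<and> mat_eq (pmat (n+1) \<sigma>) (ins_rc (pmat n \<sigma>') h k)"
proof -
  define s where "s j = (if j < k then j else j + 1)" for j :: nat
  define adj where "adj v = (if v < h then v else v - 1)" for v :: nat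
  define \<sigma>' where "\<sigma>' j = (if j \<in> {1..n} then adj (\<sigma> (s j)) else j)" for j
  have inj: "inj \<sigma>" using p by (rule permutes_inj)
  have hin: "h \<in> {1..n+1}" using h k p by (metis permutes_in_image)
  have sin: "s j \<in> {1..n+1}" "s j \<noteq> k" if "j \<in> {1..n}" for j
    using that k unfolding s_def by auto
  have sv: "\<sigma> (s j) \<in> {1..n+1}" "\<sigma> (s j) \<noteq> h" if "j \<in> {1..n}" for j
  proof -
    show "\<sigma> (s j) \<in> {1..n+1}" using permutes_in_image[OF p, of "s j"] sin[OF that] by blast
    show "\<sigma> (s j) \<noteq> h" using sin[OF that] inj h by (metis injD)
  qed
  have adj_in: "adj v \<in> {1..n}" if "v \<in> {1..n+1}" "v \<noteq> h" for v
    using that hin unfolding adj_def by auto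
  have adj_inj: "adj a = adj b \<longleftrightarrow> a = b" if "a \<noteq> h" "b \<noteq> h" for a b
    using that unfolding adj_def by auto
  have perm: "\<sigma>' permutes {1..n}"
  proof (rule bij_imp_permutes)
    show "\<And>x. x \<notin> {1..n} \<Longrightarrow> \<sigma>' x = x" unfolding \<sigma>'_def by auto
    have img: "\<sigma>' ` {1..n} \<subseteq> {1..n}"
      using adj_in sv unfolding \<sigma>'_def by auto
    have injo: "inj_on \<sigma>' {1..n}"
    proof (rule inj_onI)
      fix a b assume ab: "a \<in> {1..n}" "b \<in> {1..n}" "\<sigma>' a = \<sigma>' b"
      then have "adj (\<sigma> (s a)) = adj (\<sigma> (s b))" unfolding \<sigma>'_def by simp
      then have "\<sigma> (s a) = \<sigma> (s b)" using adj_inj sv ab by blast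
      then have "s a = s b" using inj by (simp add: inj_eq)
      then show "a = b" unfolding s_def by (auto split: if_splits)
    qed
    show "bij_betw \<sigma>' {1..n} {1..n}"
      unfolding bij_betw_def using injo endo_inj_surj[OF _ img injo] by simp
  qed
  have "mat_eq (pmat (n+1) \<sigma>) (ins_rc (pmat n \<sigma>') h k)"
    unfolding mat_eq_def
  proof (intro conjI ballI)
    show "nrows (pmat (n + 1) \<sigma>) = nrows (ins_rc (pmat n \<sigma>') h k)"
      "ncols (pmat (n + 1) \<sigma>) = ncols (ins_rc (pmat n \<sigma>') h k)"
      by (simp_all add: pmat_def ins_rc_def)
    fix i j assume i: "i \<in> {1..nrows (pmat (n + 1) \<sigma>)}" and j: "j \<in> {1..ncols (pmat (n + 1) \<sigma>)}"
    then have i: "i \<in> {1..n+1}" and j: "j \<in> {1..n+1}" by (simp_all add: pmat_def)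
    show "ent (pmat (n + 1) \<sigma>) i j = ent (ins_rc (pmat n \<sigma>') h k) i j"
    proof (cases "i = h \<or> j = k")
      case True
      then show ?thesis using h inj unfolding pmat_def ins_rc_def by (auto dest: injD)
    next
      case False
      define j' where "j' = (if j < k then j else j - 1)"
      have j': "j' \<in> {1..n}" "s j' = j" using j k False unfolding j'_def s_def by auto
      have "\<sigma>' j' = adj (\<sigma> j)" unfolding \<sigma>'_def using j' by simp
      moreover have "\<sigma> j \<noteq> h" using False h inj by (metis injD)
      moreover have "adj i = (if i < h then i else i - 1)" by (simp add: adj_def)
      ultimately have "(i = \<sigma> j) = ((if i < h then i else i - 1) = \<sigma>' j')"
        using adj_inj[of i "\<sigma> j"] False by auto
      then show ?thesis using False unfolding pmat_def ins_rc_def j'_def by simp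
    qed
  qed
  with perm show ?thesis by blast
qed

lemma mat_eq_sym: "mat_eq A B \<Longrightarrow> mat_eq B A"
  unfolding mat_eq_def by auto

lemma sub_eq_iff: "mat_eq X Y \<Longrightarrow> submatrix Q X \<longleftrightarrow> submatrix Q Y"
  using sub_mat_eq mat_eq_sym by blast

lemma pmat_dims[simp]: "nrows (pmat n \<sigma>) = n" "ncols (pmat n \<sigma>) = n" "ent (pmat n \<sigma>) i j = (i = \<sigma> j)"
  by (simp_all add: pmat_def)

lemma cols_pmat:
  assumes "\<tau> permutes {1..m}" shows "\<forall>j\<in>{1..ncols (pmat m \<tau>)}. \<exists>i\<in>{1..nrows (pmat m \<tau>)}. ent (pmat m \<tau>) i j"
proof
  fix j assume "j \<in> {1..ncols (pmat m \<tau>)}"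
  hence "\<tau> j \<in> {1..m}" using permutes_in_image[OF assms] by simp
  thus "\<exists>i\<in>{1..nrows (pmat m \<tau>)}. ent (pmat m \<tau>) i j" by auto
qed

lemma cols_tr_pmat:
  assumes "\<tau> permutes {1..m}" shows "\<forall>j\<in>{1..ncols (tr (pmat m \<tau>))}. \<exists>i\<in>{1..nrows (tr (pmat m \<tau>))}. ent (tr (pmat m \<tau>)) i j"
proof
  fix j assume j: "j \<in> {1..ncols (tr (pmat m \<tau>))}"
  have "\<tau> ` {1..m} = {1..m}" using permutes_image[OF assms] .
  then obtain i where "i \<in> {1..m}" "j = \<tau> i" using j by (metis imageE tr_sel(2) pmat_dims(1))
  thus "\<exists>i\<in>{1..nrows (tr (pmat m \<tau>))}. ent (tr (pmat m \<tau>)) i j" by auto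
qed

lemma iff_top:
  assumes "\<tau> permutes {1..m}" "k \<in> {1..n+1}"
  shows "submatrix (zero_row_top (pmat m \<tau>)) (ins_rc (pmat n \<sigma>') (n+1) k) \<longleftrightarrow> contains n \<sigma>' m \<tau>"
  using top_lemma[OF cols_pmat[OF assms(1)], of k "pmat n \<sigma>'"] assms(2) unfolding contains_def by simp

lemma iff_bottom:
  assumes "\<tau> permutes {1..m}" "k \<in> {1..n+1}"
  shows "submatrix (zero_row_bottom (pmat m \<tau>)) (ins_rc (pmat n \<sigma>') 1 k) \<longleftrightarrow> contains n \<sigma>' m \<tau>"
  using bottom_lemma[OF cols_pmat[OF assms(1)], of k "pmat n \<sigma>'"] assms(2) unfolding contains_def by simp

lemma iff_right:
  assumes "\<tau> permutes {1..m}" "h \<in> {1..n+1}"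
  shows "submatrix (zero_col_right (pmat m \<tau>)) (ins_rc (pmat n \<sigma>') h (n+1)) \<longleftrightarrow> contains n \<sigma>' m \<tau>"
proof -
  have "submatrix (zero_col_right (pmat m \<tau>)) (ins_rc (pmat n \<sigma>') h (n+1)) \<longleftrightarrow>
        submatrix (tr (zero_col_right (pmat m \<tau>))) (tr (ins_rc (pmat n \<sigma>') h (n+1)))"
    by (rule sub_tr_iff[symmetric])
  also have "\<dots> \<longleftrightarrow> submatrix (zero_row_top (tr (pmat m \<tau>))) (ins_rc (tr (pmat n \<sigma>')) (nrows (tr (pmat n \<sigma>')) + 1) h)"
    by (simp add: tr_right tr_ins)
  also have "\<dots> \<longleftrightarrow> submatrix (tr (pmat m \<tau>)) (tr (pmat n \<sigma>'))"
    using top_lemma[OF cols_tr_pmat[OF assms(1)], of h "tr (pmat n \<sigma>')"] assms(2) by simp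
  also have "\<dots> \<longleftrightarrow> contains n \<sigma>' m \<tau>" by (simp add: sub_tr_iff contains_def)
  finally show ?thesis .
qed

lemma iff_left:
  assumes "\<tau> permutes {1..m}" "h \<in> {1..n+1}"
  shows "submatrix (zero_col_left (pmat m \<tau>)) (ins_rc (pmat n \<sigma>') h 1) \<longleftrightarrow> contains n \<sigma>' m \<tau>"
proof -
  have "submatrix (zero_col_left (pmat m \<tau>)) (ins_rc (pmat n \<sigma>') h 1) \<longleftrightarrow>
        submatrix (tr (zero_col_left (pmat m \<tau>))) (tr (ins_rc (pmat n \<sigma>') h 1))"
    by (rule sub_tr_iff[symmetric])
  also have "\<dots> \<longleftrightarrow> submatrix (zero_row_bottom (tr (pmat m \<tau>))) (ins_rc (tr (pmat n \<sigma>')) 1 h)"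
    by (simp add: tr_left tr_ins)
  also have "\<dots> \<longleftrightarrow> submatrix (tr (pmat m \<tau>)) (tr (pmat n \<sigma>'))"
    using bottom_lemma[OF cols_tr_pmat[OF assms(1)], of h "tr (pmat n \<sigma>')"] assms(2) by simp
  also have "\<dots> \<longleftrightarrow> contains n \<sigma>' m \<tau>" by (simp add: sub_tr_iff contains_def)
  finally show ?thesis .
qed

lemma preimage_ex:
  assumes "\<sigma> permutes {1..N}" "v \<in> {1..N}" shows "\<exists>k\<in>{1..N}. \<sigma> k = v"
proof -
  have "\<sigma> ` {1..N} = {1..N}" using permutes_image[OF assms(1)] .
  thus ?thesis using assms(2) by (metis imageE)
qed

lemma case_top:
  assumes "\<tau> permutes {1..m}"
  shows "Av (zero_row_top (pmat m \<tau>)) = add_max_set m \<tau>"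
proof
  show "Av (zero_row_top (pmat m \<tau>)) \<subseteq> add_max_set m \<tau>"
  proof
    fix x assume "x \<in> Av (zero_row_top (pmat m \<tau>))"
    then obtain N \<sigma> where x: "x = (N, \<sigma>)" and N1: "N \<ge> 1" and p: "\<sigma> permutes {1..N}"
      and ns: "\<not> submatrix (zero_row_top (pmat m \<tau>)) (pmat N \<sigma>)"
      unfolding Av_def by auto
    obtain n where N: "N = n + 1" using N1 by (cases N) auto
    have p': "\<sigma> permutes {1..n+1}" using p N by simp
    have k1: "(1::nat) \<in> {1..n+1}" by simp
    have "\<exists>k\<in>{1..n+1}. \<sigma> k = n+1" using preimage_ex[OF p'] by simp
    then obtain k where k: "k \<in> {1..n+1}" "\<sigma> k = n+1" by (rule bexE)
    obtain \<sigma>' where s': "\<sigma>' permutes {1..n}" "mat_eq (pmat (n+1) \<sigma>) (ins_rc (pmat n \<sigma>') (n+1) k)"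
      using delete_lemma[OF p' k] by blast
    have av: "avoids n \<sigma>' m \<tau>" using ns[unfolded N] sub_eq_iff[OF s'(2)] iff_top[OF assms k(1)] unfolding avoids_def by simp
    show "x \<in> add_max_set m \<tau>" unfolding x N add_max_set_def mem_Collect_eq
      by (rule exI[of _ n], rule exI[of _ \<sigma>], rule exI[of _ \<sigma>'], rule exI[of _ k]) (use p' s' av k in simp)
  qed
  show "add_max_set m \<tau> \<subseteq> Av (zero_row_top (pmat m \<tau>))"
  proof
    fix x assume "x \<in> add_max_set m \<tau>"
    then obtain n \<sigma> \<sigma>' k where x: "x = (n+1, \<sigma>)" and p: "\<sigma> permutes {1..n+1}"
      and av: "avoids n \<sigma>' m \<tau>" and k: "k \<in> {1..n+1}"
      and me: "mat_eq (pmat (n+1) \<sigma>) (ins_rc (pmat n \<sigma>') (n+1) k)"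
      unfolding add_max_set_def by blast
    have "\<not> submatrix (zero_row_top (pmat m \<tau>)) (pmat (n+1) \<sigma>)"
      using sub_eq_iff[OF me] iff_top[OF assms k] av unfolding avoids_def by simp
    thus "x \<in> Av (zero_row_top (pmat m \<tau>))" unfolding Av_def x using p by simp
  qed
qed

lemma case_bottom:
  assumes "\<tau> permutes {1..m}"
  shows "Av (zero_row_bottom (pmat m \<tau>)) = add_min_set m \<tau>"
proof
  show "Av (zero_row_bottom (pmat m \<tau>)) \<subseteq> add_min_set m \<tau>"
  proof
    fix x assume "x \<in> Av (zero_row_bottom (pmat m \<tau>))"
    then obtain N \<sigma> where x: "x = (N, \<sigma>)" and N1: "N \<ge> 1" and p: "\<sigma> permutes {1..N}"
      and ns: "\<not> submatrix (zero_row_bottom (pmat m \<tau>)) (pmat N \<sigma>)"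
      unfolding Av_def by auto
    obtain n where N: "N = n + 1" using N1 by (cases N) auto
    have p': "\<sigma> permutes {1..n+1}" using p N by simp
    have k1: "(1::nat) \<in> {1..n+1}" by simp
    have "\<exists>k\<in>{1..n+1}. \<sigma> k = 1" using preimage_ex[OF p'] by simp
    then obtain k where k: "k \<in> {1..n+1}" "\<sigma> k = 1" by (rule bexE)
    obtain \<sigma>' where s': "\<sigma>' permutes {1..n}" "mat_eq (pmat (n+1) \<sigma>) (ins_rc (pmat n \<sigma>') (1) k)"
      using delete_lemma[OF p' k] by blast
    have av: "avoids n \<sigma>' m \<tau>" using ns[unfolded N] sub_eq_iff[OF s'(2)] iff_bottom[OF assms k(1)] unfolding avoids_def by simp
    show "x \<in> add_min_set m \<tau>" unfolding x N add_min_set_def mem_Collect_eq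
      by (rule exI[of _ n], rule exI[of _ \<sigma>], rule exI[of _ \<sigma>'], rule exI[of _ k]) (use p' s' av k in simp)
  qed
  show "add_min_set m \<tau> \<subseteq> Av (zero_row_bottom (pmat m \<tau>))"
  proof
    fix x assume "x \<in> add_min_set m \<tau>"
    then obtain n \<sigma> \<sigma>' k where x: "x = (n+1, \<sigma>)" and p: "\<sigma> permutes {1..n+1}"
      and av: "avoids n \<sigma>' m \<tau>" and k: "k \<in> {1..n+1}"
      and me: "mat_eq (pmat (n+1) \<sigma>) (ins_rc (pmat n \<sigma>') (1) k)"
      unfolding add_min_set_def by blast
    have "\<not> submatrix (zero_row_bottom (pmat m \<tau>)) (pmat (n+1) \<sigma>)"
      using sub_eq_iff[OF me] iff_bottom[OF assms k] av unfolding avoids_def by simp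
    thus "x \<in> Av (zero_row_bottom (pmat m \<tau>))" unfolding Av_def x using p by simp
  qed
qed

lemma case_right:
  assumes "\<tau> permutes {1..m}"
  shows "Av (zero_col_right (pmat m \<tau>)) = add_last_set m \<tau>"
proof
  show "Av (zero_col_right (pmat m \<tau>)) \<subseteq> add_last_set m \<tau>"
  proof
    fix x assume "x \<in> Av (zero_col_right (pmat m \<tau>))"
    then obtain N \<sigma> where x: "x = (N, \<sigma>)" and N1: "N \<ge> 1" and p: "\<sigma> permutes {1..N}"
      and ns: "\<not> submatrix (zero_col_right (pmat m \<tau>)) (pmat N \<sigma>)"
      unfolding Av_def by auto
    obtain n where N: "N = n + 1" using N1 by (cases N) auto
    have p': "\<sigma> permutes {1..n+1}" using p N by simp
    have k1: "(1::nat) \<in> {1..n+1}" by simp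
    have kk: "(n+1) \<in> {1..n+1}" by simp
    have hh: "\<sigma> (n+1) \<in> {1..n+1}" using permutes_in_image[OF p'] by simp
    obtain \<sigma>' where s': "\<sigma>' permutes {1..n}" "mat_eq (pmat (n+1) \<sigma>) (ins_rc (pmat n \<sigma>') (\<sigma> (n+1)) (n+1))"
      using delete_lemma[OF p' kk refl] by blast
    have av: "avoids n \<sigma>' m \<tau>" using ns[unfolded N] sub_eq_iff[OF s'(2)] iff_right[OF assms hh] unfolding avoids_def by simp
    show "x \<in> add_last_set m \<tau>" unfolding x N add_last_set_def mem_Collect_eq
      by (rule exI[of _ n], rule exI[of _ \<sigma>], rule exI[of _ \<sigma>'], rule exI[of _ "\<sigma> (n+1)"]) (use p' s' av hh in simp)
  qed
  show "add_last_set m \<tau> \<subseteq> Av (zero_col_right (pmat m \<tau>))"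
  proof
    fix x assume "x \<in> add_last_set m \<tau>"
    then obtain n \<sigma> \<sigma>' k where x: "x = (n+1, \<sigma>)" and p: "\<sigma> permutes {1..n+1}"
      and av: "avoids n \<sigma>' m \<tau>" and k: "k \<in> {1..n+1}"
      and me: "mat_eq (pmat (n+1) \<sigma>) (ins_rc (pmat n \<sigma>') k (n+1))"
      unfolding add_last_set_def by blast
    have "\<not> submatrix (zero_col_right (pmat m \<tau>)) (pmat (n+1) \<sigma>)"
      using sub_eq_iff[OF me] iff_right[OF assms k] av unfolding avoids_def by simp
    thus "x \<in> Av (zero_col_right (pmat m \<tau>))" unfolding Av_def x using p by simp
  qed
qed

lemma case_left:
  assumes "\<tau> permutes {1..m}"
  shows "Av (zero_col_left (pmat m \<tau>)) = add_first_set m \<tau>"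
proof
  show "Av (zero_col_left (pmat m \<tau>)) \<subseteq> add_first_set m \<tau>"
  proof
    fix x assume "x \<in> Av (zero_col_left (pmat m \<tau>))"
    then obtain N \<sigma> where x: "x = (N, \<sigma>)" and N1: "N \<ge> 1" and p: "\<sigma> permutes {1..N}"
      and ns: "\<not> submatrix (zero_col_left (pmat m \<tau>)) (pmat N \<sigma>)"
      unfolding Av_def by auto
    obtain n where N: "N = n + 1" using N1 by (cases N) auto
    have p': "\<sigma> permutes {1..n+1}" using p N by simp
    have k1: "(1::nat) \<in> {1..n+1}" by simp
    have kk: "(n+1) \<in> {1..n+1}" by simp
    have hh: "\<sigma> 1 \<in> {1..n+1}" using permutes_in_image[OF p'] by simp
    obtain \<sigma>' where s': "\<sigma>' permutes {1..n}" "mat_eq (pmat (n+1) \<sigma>) (ins_rc (pmat n \<sigma>') (\<sigma> 1) (1))"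
      using delete_lemma[OF p' k1 refl] by blast
    have av: "avoids n \<sigma>' m \<tau>" using ns[unfolded N] sub_eq_iff[OF s'(2)] iff_left[OF assms hh] unfolding avoids_def by simp
    show "x \<in> add_first_set m \<tau>" unfolding x N add_first_set_def mem_Collect_eq
      by (rule exI[of _ n], rule exI[of _ \<sigma>], rule exI[of _ \<sigma>'], rule exI[of _ "\<sigma> 1"]) (use p' s' av hh in simp)
  qed
  show "add_first_set m \<tau> \<subseteq> Av (zero_col_left (pmat m \<tau>))"
  proof
    fix x assume "x \<in> add_first_set m \<tau>"
    then obtain n \<sigma> \<sigma>' k where x: "x = (n+1, \<sigma>)" and p: "\<sigma> permutes {1..n+1}"
      and av: "avoids n \<sigma>' m \<tau>" and k: "k \<in> {1..n+1}"
      and me: "mat_eq (pmat (n+1) \<sigma>) (ins_rc (pmat n \<sigma>') k (1))"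
      unfolding add_first_set_def by blast
    have "\<not> submatrix (zero_col_left (pmat m \<tau>)) (pmat (n+1) \<sigma>)"
      using sub_eq_iff[OF me] iff_left[OF assms k] av unfolding avoids_def by simp
    thus "x \<in> Av (zero_col_left (pmat m \<tau>))" unfolding Av_def x using p by simp
  qed
qed

theorem proposition11:
  fixes \<tau> :: "nat \<Rightarrow> nat" and m :: nat
  assumes "\<tau> permutes {1..m}"
  shows "Av (zero_row_top (pmat m \<tau>)) = add_max_set m \<tau> \<and>
     Av (zero_row_bottom (pmat m \<tau>)) = add_min_set m \<tau> \<and>
     Av (zero_col_right (pmat m \<tau>)) = add_last_set m \<tau> \<and>
     Av (zero_col_left (pmat m \<tau>)) = add_first_set m \<tau>"
  using case_top[OF assms] case_bottom[OF assms] case_right[OF assms] case_left[OF assms] by simp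

end
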